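(* Let $k\ge2$, and let $c>\frac12$ and $\delta>0$ be fixed. Then for every $k$-admissible $m\times k$ matrix $D$ (with denominator $q$) and every $n\ge1$, $$I(D,n,c,\delta)\le M(D)^{-n}\frac{\delta^{m-2kc}}{(2c-1)^m},$$ where $M(D)$ is $q^{-m}$ times the largest value taken by the determinant of any $m\times m$ minor of $D$.
   Context: A division $(\nu,\mu)$ of $\{1,\dots,k\}$ consists of $1\le m\le k-1$ and strictly increasing sequences $\nu_1<\dots<\nu_m$, $\mu_1<\dots<\mu_{k-m}$ in $\{1,\dots,k\}$ which are disjoint. Given a positive integer $q$, an $m\times k$ integer matrix $D=(d_{ij})$ is $(\nu,\mu)$-admissible (with denominator $q$) if no column vanishes, the gcd of its entries is $1$, $d_{i\nu_j}=q\delta_{ij}$ for $1\le i,j\le m$, and $d_{i\mu_j}=0$ whenever $\mu_j<\nu_i$; $D$ is $k$-admissible if it is $(\nu,\mu)$-admissible for some division and some $q$. $V_n=\pi^{n/2}/\Gamma(\frac n2+1)$, $R_n(\delta)=(\delta/V_n)^{1/n}$, $f_{c,\delta}(\mathbf x)=|\mathbf x|^{-2cn}$ if $|\mathbf x|>R_n(\delta)$ and $0$ otherwise, and $$I(D,n,c,\delta)=V_n^{-2kc}\int_{\mathbb R^n}\cdots\int_{\mathbb R^n}\prod_{j=1}^k f_{c,\delta}\Big(\sum_{i=1}^m\frac{d_{ij}}{q}\mathbf x_i\Big)\,d\mathbf x_1\cdots d\mathbf x_m.$$ *)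

theory Defs
  imports "HOL-Analysis.Analysis"
begin

text \<open>Indices are 0-based: rows 0..m-1, columns 0..k-1.
  Matrices are functions nat => nat => int (entries outside the range are irrelevant).\<close>

definition is_division :: "nat \<Rightarrow> nat \<Rightarrow> (nat \<Rightarrow> nat) \<Rightarrow> (nat \<Rightarrow> nat) \<Rightarrow> bool" where
  "is_division k m \<nu> \<mu> \<longleftrightarrow>
     1 \<le> m \<and> m \<le> k - 1 \<and>
     strict_mono_on {..<m} \<nu> \<and> strict_mono_on {..<k - m} \<mu> \<and>
     \<nu> ` {..<m} \<subseteq> {..<k} \<and> \<mu> ` {..<k - m} \<subseteq> {..<k} \<and>
     \<nu> ` {..<m} \<inter> \<mu> ` {..<k - m} = {}"

definition admissible ::
  "nat \<Rightarrow> nat \<Rightarrow> (nat \<Rightarrow> nat) \<Rightarrow> (nat \<Rightarrow> nat) \<Rightarrow> int \<Rightarrow> (nat \<Rightarrow> nat \<Rightarrow> int) \<Rightarrow> bool" where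
  "admissible k m \<nu> \<mu> q D \<longleftrightarrow>
     is_division k m \<nu> \<mu> \<and> q > 0 \<and>
     (\<forall>j<k. \<exists>i<m. D i j \<noteq> 0) \<and>
     Gcd {D i j | i j. i < m \<and> j < k} = 1 \<and>
     (\<forall>i<m. \<forall>j<m. D i (\<nu> j) = (if i = j then q else 0)) \<and>
     (\<forall>i<m. \<forall>j<k - m. \<mu> j < \<nu> i \<longrightarrow> D i (\<mu> j) = 0)"

definition mdet :: "nat \<Rightarrow> (nat \<Rightarrow> nat \<Rightarrow> int) \<Rightarrow> int" where
  "mdet m A = (\<Sum>p | p permutes {..<m}. sign p * (\<Prod>i<m. A i (p i)))"

definition MD :: "nat \<Rightarrow> nat \<Rightarrow> int \<Rightarrow> (nat \<Rightarrow> nat \<Rightarrow> int) \<Rightarrow> real" where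
  "MD k m q D = real_of_int q powi (- int m) *
     real_of_int (Max {\<bar>mdet m (\<lambda>i j. D i (s j))\<bar> | s.
         strict_mono_on {..<m} s \<and> s ` {..<m} \<subseteq> {..<k}})"

definition Vn :: "nat \<Rightarrow> real" where
  "Vn n = pi powr (real n / 2) / Gamma (real n / 2 + 1)"

definition Rn :: "nat \<Rightarrow> real \<Rightarrow> real" where
  "Rn n \<delta> = (\<delta> / Vn n) powr (1 / real n)"

definition fcd :: "real \<Rightarrow> real \<Rightarrow> real ^ 'n \<Rightarrow> real" where
  "fcd c \<delta> x = (if norm x > Rn CARD('n) \<delta> then norm x powr (- 2 * c * real CARD('n)) else 0)"

text \<open>I(D,n,c,delta) with n = CARD('n); the integral over (R^n)^m is a nonnegative
  Lebesgue integral, so the value lives in ennreal.\<close>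
definition Iint :: "nat \<Rightarrow> nat \<Rightarrow> int \<Rightarrow> (nat \<Rightarrow> nat \<Rightarrow> int) \<Rightarrow> real \<Rightarrow> real \<Rightarrow> ('n::finite) itself \<Rightarrow> ennreal" where
  "Iint k m q D c \<delta> _ =
     ennreal (Vn CARD('n) powr (- 2 * real k * c)) *
     (\<integral>\<^sup>+ x. ennreal (\<Prod>j<k. fcd c \<delta> (\<Sum>i<m. (real_of_int (D i j) / real_of_int q) *\<^sub>R (x i :: real ^ 'n)))
        \<partial>(PiM {..<m} (\<lambda>_. lborel)))"

end

theory Submission
  imports Defs "Jordan_Normal_Form.Determinant"
begin


lemma det_E:
  fixes \<beta> :: "nat \<Rightarrow> 'a::comm_ring_1"
  assumes j0: "j0 < n"
  shows "det (mat n n (\<lambda>(i,j). if i = j then 1 else if i = j0 then \<beta> j else 0)) = 1"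
proof -
  let ?E = "mat n n (\<lambda>(i,j). if i = j then 1 else if i = j0 then \<beta> j else (0::'a))"
  have E: "?E \<in> carrier_mat n n" by simp
  have "det ?E = (\<Sum>i<n. ?E $$ (i,j0) * cofactor ?E i j0)"
    by (rule laplace_expansion_column[OF E j0])
  also have "\<dots> = (\<Sum>i<n. (if i = j0 then cofactor ?E j0 j0 else 0))"
    using j0 by (intro sum.cong) auto
  also have "\<dots> = cofactor ?E j0 j0" using j0 by simp
  finally have 1: "det ?E = cofactor ?E j0 j0" .
  have "mat_delete ?E j0 j0 = 1\<^sub>m (n - 1)"
    by (rule eq_matI) (auto simp: mat_delete_def)
  with 1 show ?thesis by (simp add: cofactor_def)
qed

lemma det_schur:
  fixes a :: "nat \<Rightarrow> nat \<Rightarrow> 'a::field"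
  assumes j0: "j0 < Suc m" and al: "a m j0 \<noteq> 0"
  shows "det (mat (Suc m) (Suc m) (\<lambda>(i,j). a i j)) = a m j0 * (-1)^(m+j0) *
     det (mat m m (\<lambda>(i,j). a i (insert_index j0 j) - a m (insert_index j0 j) / a m j0 * a i j0))"
proof -
  define \<alpha> where "\<alpha> = a m j0"
  define A where "A = mat (Suc m) (Suc m) (\<lambda>(i,j). a i j)"
  define E where "E = mat (Suc m) (Suc m) (\<lambda>(i,j). if i = j then 1 else if i = j0 then - a m j / \<alpha> else 0)"
  have A: "A \<in> carrier_mat (Suc m) (Suc m)" and E: "E \<in> carrier_mat (Suc m) (Suc m)"
    by (auto simp: A_def E_def)
  have dE: "det E = 1" unfolding E_def by (rule det_E[OF j0])
  define C where "C = mat (Suc m) (Suc m) (\<lambda>(i,j). if j = j0 then a i j else a i j - a m j / \<alpha> * a i j0)"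
  have AE: "A * E = C"
  proof (rule eq_matI)
    fix i j assume i: "i < dim_row C" and j: "j < dim_col C"
    then have i: "i < Suc m" and j: "j < Suc m" by (auto simp: C_def)
    have "(A * E) $$ (i,j) = (\<Sum>l\<in>{0..<Suc m}. a i l * E $$ (l, j))"
      using i j by (simp add: A_def E_def scalar_prod_def)
    also have "\<dots> = (\<Sum>l\<in>{0..<Suc m}. (if l = j then a i l else 0) + (if l = j0 \<and> j \<noteq> j0 then a i l * (- a m j / \<alpha>) else 0))"
      using j by (intro sum.cong) (auto simp: E_def)
    also have "\<dots> = C $$ (i,j)"
      using i j j0 by (simp add: sum.distrib C_def)
    finally show "(A * E) $$ (i,j) = C $$ (i,j)" .
  qed (auto simp: A_def E_def C_def)
  have C: "C \<in> carrier_mat (Suc m) (Suc m)" by (simp add: C_def)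
  have "det A = det (A * E)" using det_mult[OF A E] dE by simp
  also have "\<dots> = det C" by (simp add: AE)
  also have "\<dots> = (\<Sum>j<Suc m. C $$ (m,j) * cofactor C m j)"
    by (rule laplace_expansion_row[OF C]) simp
  also have "\<dots> = (\<Sum>j<Suc m. if j = j0 then \<alpha> * cofactor C m j0 else 0)"
    by (intro sum.cong) (auto simp: C_def \<alpha>_def al)
  also have "\<dots> = \<alpha> * cofactor C m j0" using j0 by simp
  finally have 1: "det A = \<alpha> * cofactor C m j0" .
  have "mat_delete C m j0 = mat m m (\<lambda>(i,j). a i (insert_index j0 j) - a m (insert_index j0 j) / a m j0 * a i j0)"
    by (rule eq_matI) (auto simp: mat_delete_def C_def insert_index_def \<alpha>_def)
  with 1 show ?thesis by (simp add: A_def cofactor_def \<alpha>_def)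
qed



lemma lborel_affine_nn:
  fixes h :: "'a::euclidean_space \<Rightarrow> ennreal"
  assumes c: "c \<noteq> 0" and h: "h \<in> borel_measurable borel"
  shows "(\<integral>\<^sup>+y. h y \<partial>lborel) = ennreal (\<bar>c\<bar>^DIM('a)) * (\<integral>\<^sup>+t. h (t0 + c *\<^sub>R t) \<partial>lborel)"
proof -
  have eq: "lborel = density (distr lborel borel (\<lambda>x. t0 + c *\<^sub>R x)) (\<lambda>_. \<bar>c\<bar>^DIM('a))"
    by (rule lborel_affine[OF c])
  have "(\<integral>\<^sup>+y. h y \<partial>lborel) = (\<integral>\<^sup>+y. h y \<partial>density (distr lborel borel (\<lambda>x. t0 + c *\<^sub>R x)) (\<lambda>_. \<bar>c\<bar>^DIM('a)))"
    using arg_cong[OF eq, of "\<lambda>M. nn_integral M h"] .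
  also have "\<dots> = (\<integral>\<^sup>+y. ennreal (\<bar>c\<bar>^DIM('a)) * h y \<partial>distr lborel borel (\<lambda>x. t0 + c *\<^sub>R x))"
    using h by (subst nn_integral_density) auto
  also have "\<dots> = (\<integral>\<^sup>+t. ennreal (\<bar>c\<bar>^DIM('a)) * h (t0 + c *\<^sub>R t) \<partial>lborel)"
    using h by (subst nn_integral_distr) auto
  also have "\<dots> = ennreal (\<bar>c\<bar>^DIM('a)) * (\<integral>\<^sup>+t. h (t0 + c *\<^sub>R t) \<partial>lborel)"
    using h by (subst nn_integral_cmult) auto
  finally show ?thesis .
qed

lemma lborel_translate_nn:
  fixes h :: "'a::euclidean_space \<Rightarrow> ennreal"
  assumes h: "h \<in> borel_measurable borel"
  shows "(\<integral>\<^sup>+t. h (t + t0) \<partial>lborel) = (\<integral>\<^sup>+y. h y \<partial>lborel)"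
  using lborel_affine_nn[OF _ h, of 1 t0] by (simp add: add.commute)

interpretation lb: product_sigma_finite "\<lambda>_::nat. (lborel :: 'a::euclidean_space measure)"
  by (simp add: product_sigma_finite_def sigma_finite_lborel)

lemma bij_insert_index: assumes j0: "j0 < Suc m" shows "bij_betw (insert_index j0) {..<m} ({..<Suc m} - {j0})"
proof (rule bij_betw_imageI)
  show "inj_on (insert_index j0) {..<m}" by (auto simp: inj_on_def insert_index_def split: if_splits)
  show "insert_index j0 ` {..<m} = {..<Suc m} - {j0}"
  proof
    show "insert_index j0 ` {..<m} \<subseteq> {..<Suc m} - {j0}" by (auto simp: insert_index_def)
    show "{..<Suc m} - {j0} \<subseteq> insert_index j0 ` {..<m}"
    proof
      fix x assume x: "x \<in> {..<Suc m} - {j0}"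
      show "x \<in> insert_index j0 ` {..<m}"
      proof (cases "x < j0")
        case True
        then show ?thesis using x j0 by (intro image_eqI[of _ _ x]) (auto simp: insert_index_def)
      next
        case False
        then show ?thesis using x by (intro image_eqI[of _ _ "x - 1"]) (auto simp: insert_index_def)
      qed
    qed
  qed
qed


lemma cov:
  fixes a :: "nat \<Rightarrow> nat \<Rightarrow> real" and g :: "nat \<Rightarrow> 'a::euclidean_space \<Rightarrow> ennreal"
  assumes "det (mat m m (\<lambda>(i,j). a i j)) \<noteq> 0" and "\<And>j. g j \<in> borel_measurable borel"
  shows "ennreal (\<bar>det (mat m m (\<lambda>(i,j). a i j))\<bar> ^ DIM('a)) *
     (\<integral>\<^sup>+x. (\<Prod>j<m. g j (\<Sum>i<m. a i j *\<^sub>R x i)) \<partial>PiM {..<m} (\<lambda>_. lborel))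
   = (\<Prod>j<m. \<integral>\<^sup>+y. g j y \<partial>lborel)"
  using assms
proof (induction m arbitrary: a g)
  case 0
  then show ?case by (simp add: PiM_empty)
next
  case (Suc m)
  note gm[measurable] = Suc.prems(2)
  let ?A = "mat (Suc m) (Suc m) (\<lambda>(i,j). a i j)"
  have "\<exists>j0<Suc m. a m j0 \<noteq> 0"
  proof (rule ccontr)
    assume nz: "\<not> ?thesis"
    then have "det ?A = (\<Sum>j<Suc m. ?A $$ (m,j) * cofactor ?A m j)"
      by (intro laplace_expansion_row) auto
    also have "\<dots> = 0" using nz by (intro sum.neutral) auto
    finally show False using Suc.prems(1) by simp
  qed
  then obtain j0 where j0: "j0 < Suc m" and al: "a m j0 \<noteq> 0" by blast
  define \<alpha> where "\<alpha> = a m j0"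
  define \<sigma> where "\<sigma> = insert_index j0"
  define b where "b i j = a i (\<sigma> j) - a m (\<sigma> j) / a m j0 * a i j0" for i j
  define \<beta> where "\<beta> j = a m j / \<alpha>" for j
  let ?B = "mat m m (\<lambda>(i,j). b i j)"
  have dA: "det ?A = \<alpha> * (-1)^(m+j0) * det ?B"
    unfolding \<alpha>_def b_def \<sigma>_def by (rule det_schur[of j0 m a, OF j0 al])
  then have dB: "det ?B \<noteq> 0" using Suc.prems(1) by auto
  have aA: "\<bar>det ?A\<bar> ^ DIM('a) = \<bar>\<alpha>\<bar> ^ DIM('a) * \<bar>det ?B\<bar> ^ DIM('a)"
    by (simp add: dA abs_mult power_mult_distrib)
  have bij: "bij_betw \<sigma> {..<m} ({..<Suc m} - {j0})"
    unfolding \<sigma>_def by (rule bij_insert_index[OF j0])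
  define u where "u x j = (\<Sum>i<m. a i j *\<^sub>R x i)" for x :: "nat \<Rightarrow> 'a" and j
  define K where "K x t = (\<Prod>j<m. g (\<sigma> j) ((\<Sum>i<m. b i j *\<^sub>R x i) + \<beta> (\<sigma> j) *\<^sub>R t))" for x :: "nat \<Rightarrow> 'a" and t
  have Km[measurable]: "(\<lambda>(x,t). K x t) \<in> borel_measurable (PiM {..<m} (\<lambda>_. lborel) \<Otimes>\<^sub>M lborel)"
    unfolding K_def by measurable
  have Kt[measurable]: "(\<lambda>t. \<integral>\<^sup>+x. K x t \<partial>PiM {..<m} (\<lambda>_. lborel)) \<in> borel_measurable borel"
  proof -
    interpret S: sigma_finite_measure "PiM {..<m} (\<lambda>_. lborel :: 'a measure)"
      by (rule lb.sigma_finite) auto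
    have "(\<lambda>(t,x). K x t) \<in> borel_measurable (lborel \<Otimes>\<^sub>M PiM {..<m} (\<lambda>_. lborel))"
      unfolding K_def by measurable
    then have "(\<lambda>t. \<integral>\<^sup>+x. K x t \<partial>PiM {..<m} (\<lambda>_. lborel)) \<in> borel_measurable lborel"
      using S.borel_measurable_nn_integral_fst[of "\<lambda>(t,x). K x t" lborel] by simp
    then show ?thesis by simp
  qed
  have step1: "(\<integral>\<^sup>+x. (\<Prod>j<Suc m. g j (\<Sum>i<Suc m. a i j *\<^sub>R x i)) \<partial>PiM {..<Suc m} (\<lambda>_. lborel))
     = (\<integral>\<^sup>+x. (\<integral>\<^sup>+y. (\<Prod>j<Suc m. g j (\<Sum>i<Suc m. a i j *\<^sub>R (x(m := y)) i)) \<partial>lborel) \<partial>PiM {..<m} (\<lambda>_. lborel))"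
    unfolding lessThan_Suc[of m]
    by (rule lb.product_nn_integral_insert) (auto, measurable)
  have step2: "(\<integral>\<^sup>+y. (\<Prod>j<Suc m. g j (\<Sum>i<Suc m. a i j *\<^sub>R (x(m := y)) i)) \<partial>lborel)
      = ennreal (\<bar>1/\<alpha>\<bar>^DIM('a)) * (\<integral>\<^sup>+t. g j0 t * K x t \<partial>lborel)" for x
  proof -
    have "(\<integral>\<^sup>+y. (\<Prod>j<Suc m. g j (\<Sum>i<Suc m. a i j *\<^sub>R (x(m := y)) i)) \<partial>lborel)
       = (\<integral>\<^sup>+y. (\<Prod>j<Suc m. g j (u x j + a m j *\<^sub>R y)) \<partial>lborel)"
      by (intro nn_integral_cong prod.cong refl arg_cong[where f="g _"]) (simp add: u_def)
    also have "\<dots> = ennreal (\<bar>1/\<alpha>\<bar>^DIM('a)) * (\<integral>\<^sup>+t. (\<Prod>j<Suc m. g j (u x j + a m j *\<^sub>R (- (1/\<alpha>) *\<^sub>R u x j0 + (1/\<alpha>) *\<^sub>R t))) \<partial>lborel)"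
      using al unfolding \<alpha>_def by (intro lborel_affine_nn) auto
    also have "(\<lambda>t. (\<Prod>j<Suc m. g j (u x j + a m j *\<^sub>R (- (1/\<alpha>) *\<^sub>R u x j0 + (1/\<alpha>) *\<^sub>R t)))) = (\<lambda>t. g j0 t * K x t)"
    proof
      fix t
      define G where "G j = g j (u x j + a m j *\<^sub>R (- (1/\<alpha>) *\<^sub>R u x j0 + (1/\<alpha>) *\<^sub>R t))" for j
      have "(\<Prod>j<Suc m. G j) = G j0 * (\<Prod>j\<in>{..<Suc m} - {j0}. G j)"
        using j0 by (subst prod.remove[of _ j0]) auto
      also have "(\<Prod>j\<in>{..<Suc m} - {j0}. G j) = (\<Prod>j<m. G (\<sigma> j))"
        using prod.reindex_bij_betw[OF bij, of G] by simp
      also have "G j0 = g j0 t"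
        unfolding G_def using al by (simp add: \<alpha>_def scaleR_add_right scaleR_right_diff_distrib)
      also have "(\<Prod>j<m. G (\<sigma> j)) = K x t"
      proof -
        have eq: "u x (\<sigma> j) + a m (\<sigma> j) *\<^sub>R (- (1 / \<alpha>) *\<^sub>R u x j0 + (1 / \<alpha>) *\<^sub>R t) =
           (\<Sum>i<m. b i j *\<^sub>R x i) + \<beta> (\<sigma> j) *\<^sub>R t" for j
          by (simp add: u_def b_def \<beta>_def \<alpha>_def scaleR_add_right scaleR_sum_right
              sum_subtractf[symmetric] sum.distrib[symmetric] algebra_simps)
        show ?thesis unfolding G_def K_def by (simp only: eq)
      qed
      finally show "(\<Prod>j<Suc m. G j) = g j0 t * K x t" .
    qed
    finally show ?thesis .
  qed
  have step3: "(\<integral>\<^sup>+x. (\<integral>\<^sup>+t. g j0 t * K x t \<partial>lborel) \<partial>PiM {..<m} (\<lambda>_. lborel))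
      = (\<integral>\<^sup>+t. g j0 t * (\<integral>\<^sup>+x. K x t \<partial>PiM {..<m} (\<lambda>_. lborel)) \<partial>lborel)"
  proof -
    interpret P: pair_sigma_finite "PiM {..<m} (\<lambda>_. lborel)" "lborel :: 'a measure"
      by (intro pair_sigma_finite.intro lb.sigma_finite sigma_finite_lborel) auto
    have "(\<integral>\<^sup>+x. (\<integral>\<^sup>+t. g j0 t * K x t \<partial>lborel) \<partial>PiM {..<m} (\<lambda>_. lborel))
        = (\<integral>\<^sup>+t. (\<integral>\<^sup>+x. g j0 t * K x t \<partial>PiM {..<m} (\<lambda>_. lborel)) \<partial>lborel)"
      by (rule P.Fubini'[symmetric]) measurable
    also have "\<dots> = (\<integral>\<^sup>+t. g j0 t * (\<integral>\<^sup>+x. K x t \<partial>PiM {..<m} (\<lambda>_. lborel)) \<partial>lborel)"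
      by (intro nn_integral_cong nn_integral_cmult) measurable
    finally show ?thesis .
  qed
  have step4: "ennreal (\<bar>det ?B\<bar> ^ DIM('a)) * (\<integral>\<^sup>+x. K x t \<partial>PiM {..<m} (\<lambda>_. lborel))
      = (\<Prod>j<m. \<integral>\<^sup>+y. g (\<sigma> j) y \<partial>lborel)" for t
  proof -
    have "ennreal (\<bar>det ?B\<bar> ^ DIM('a)) * (\<integral>\<^sup>+x. K x t \<partial>PiM {..<m} (\<lambda>_. lborel))
       = (\<Prod>j<m. \<integral>\<^sup>+y. g (\<sigma> j) (y + \<beta> (\<sigma> j) *\<^sub>R t) \<partial>lborel)"
      unfolding K_def by (rule Suc.IH[OF dB, where g="\<lambda>j y. g (\<sigma> j) (y + \<beta> (\<sigma> j) *\<^sub>R t)"]) measurable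
    also have "\<dots> = (\<Prod>j<m. \<integral>\<^sup>+y. g (\<sigma> j) y \<partial>lborel)"
      by (intro prod.cong refl lborel_translate_nn) measurable
    finally show ?thesis .
  qed
  have "ennreal (\<bar>det ?A\<bar> ^ DIM('a)) *
     (\<integral>\<^sup>+x. (\<Prod>j<Suc m. g j (\<Sum>i<Suc m. a i j *\<^sub>R x i)) \<partial>PiM {..<Suc m} (\<lambda>_. lborel))
     = ennreal (\<bar>\<alpha>\<bar> ^ DIM('a)) * ennreal (\<bar>det ?B\<bar> ^ DIM('a)) * 
       (\<integral>\<^sup>+x. ennreal (\<bar>1/\<alpha>\<bar>^DIM('a)) * (\<integral>\<^sup>+t. g j0 t * K x t \<partial>lborel) \<partial>PiM {..<m} (\<lambda>_. lborel))"
  proof -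
    have e: "ennreal (\<bar>det ?A\<bar> ^ DIM('a)) = ennreal (\<bar>\<alpha>\<bar> ^ DIM('a)) * ennreal (\<bar>det ?B\<bar> ^ DIM('a))"
      by (simp add: aA ennreal_mult)
    show ?thesis by (simp only: step1 step2 e)
  qed
  also have "\<dots> = ennreal (\<bar>\<alpha>\<bar> ^ DIM('a)) * ennreal (\<bar>1/\<alpha>\<bar>^DIM('a)) * ennreal (\<bar>det ?B\<bar> ^ DIM('a)) * 
       (\<integral>\<^sup>+x. (\<integral>\<^sup>+t. g j0 t * K x t \<partial>lborel) \<partial>PiM {..<m} (\<lambda>_. lborel))"
    by (subst nn_integral_cmult) (measurable, simp add: ac_simps)
  also have "ennreal (\<bar>\<alpha>\<bar> ^ DIM('a)) * ennreal (\<bar>1/\<alpha>\<bar>^DIM('a)) = 1"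
    using al by (simp add: \<alpha>_def ennreal_mult'[symmetric] power_mult_distrib[symmetric] abs_mult[symmetric])
  also have "1 * ennreal (\<bar>det ?B\<bar> ^ DIM('a)) *
       (\<integral>\<^sup>+x. (\<integral>\<^sup>+t. g j0 t * K x t \<partial>lborel) \<partial>PiM {..<m} (\<lambda>_. lborel))
     = (\<integral>\<^sup>+t. g j0 t * (ennreal (\<bar>det ?B\<bar> ^ DIM('a)) * (\<integral>\<^sup>+x. K x t \<partial>PiM {..<m} (\<lambda>_. lborel))) \<partial>lborel)"
  proof -
    let ?c = "ennreal (\<bar>det ?B\<bar> ^ DIM('a))"
    have "1 * ?c * (\<integral>\<^sup>+x. (\<integral>\<^sup>+t. g j0 t * K x t \<partial>lborel) \<partial>PiM {..<m} (\<lambda>_. lborel))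
        = ?c * (\<integral>\<^sup>+t. g j0 t * (\<integral>\<^sup>+x. K x t \<partial>PiM {..<m} (\<lambda>_. lborel)) \<partial>lborel)"
      by (simp only: step3 mult_1)
    also have "\<dots> = (\<integral>\<^sup>+t. ?c * (g j0 t * (\<integral>\<^sup>+x. K x t \<partial>PiM {..<m} (\<lambda>_. lborel))) \<partial>lborel)"
      by (rule nn_integral_cmult[symmetric]) measurable
    also have "\<dots> = (\<integral>\<^sup>+t. g j0 t * (?c * (\<integral>\<^sup>+x. K x t \<partial>PiM {..<m} (\<lambda>_. lborel))) \<partial>lborel)"
      by (simp only: mult.left_commute)
    finally show ?thesis .
  qed
  also have "\<dots> = (\<integral>\<^sup>+t. g j0 t * (\<Prod>j<m. \<integral>\<^sup>+y. g (\<sigma> j) y \<partial>lborel) \<partial>lborel)"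
    by (simp add: step4)
  also have "\<dots> = (\<integral>\<^sup>+t. g j0 t \<partial>lborel) * (\<Prod>j<m. \<integral>\<^sup>+y. g (\<sigma> j) y \<partial>lborel)"
    by (subst nn_integral_multc) auto
  also have "\<dots> = (\<Prod>j<Suc m. \<integral>\<^sup>+y. g j y \<partial>lborel)"
    using j0 prod.reindex_bij_betw[OF bij, of "\<lambda>j. \<integral>\<^sup>+y. g j y \<partial>lborel"]
    by (subst prod.remove[of _ j0]) auto
  finally show ?case .
qed



lemma tail_powr:
  fixes a p :: real
  assumes a: "a > 0" and p: "p > 0"
  shows "(\<integral>\<^sup>+r. ennreal (p * r powr (-p-1)) * indicator {a..} r \<partial>lborel) = ennreal (a powr (-p))"
proof -
  have "(\<integral>\<^sup>+r. ennreal (p * r powr (-p-1)) * indicator {a..} r \<partial>lborel) = 0 - (- (a powr (-p)))"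
  proof (rule nn_integral_FTC_atLeast)
    show "(\<lambda>r. p * r powr (-p-1)) \<in> borel_measurable borel" by measurable
    show "DERIV (\<lambda>r. - (r powr (-p))) x :> p * x powr (-p-1)" if "a \<le> x" for x
    proof -
      have "x > 0" using a that by simp
      from DERIV_minus[OF has_real_derivative_powr[OF this, of "-p"]] show ?thesis
        by simp
    qed
    show "0 \<le> p * x powr (- p - 1)" for x using p by simp
    show "((\<lambda>r. - (r powr (-p))) \<longlongrightarrow> 0) at_top"
      using tendsto_minus[OF tendsto_neg_powr[of "-p" "\<lambda>x. x" at_top]] p by (simp add: filterlim_ident)
  qed
  then show ?thesis by simp
qed

lemma radial:
  fixes R p :: real
  assumes R: "R > 0" and p: "p > real DIM('a)"
  shows "(\<integral>\<^sup>+x. ennreal (if norm x > R then norm x powr (-p) else 0) \<partial>(lborel::'a::euclidean_space measure))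
    = ennreal (unit_ball_vol (real DIM('a)) * R powr (real DIM('a) - p) * real DIM('a) / (p - real DIM('a)))"
proof -
  define d where "d = DIM('a)"
  define n where "n = real d"
  define V where "V = unit_ball_vol n"
  have V: "V > 0" by (simp add: V_def n_def)
  have p0: "p > 0" using p by (metis of_nat_0_le_iff le_less_trans)
  define h where "h x r = (if norm x \<le> r \<and> R < norm x then ennreal (p * r powr (-p-1)) else 0)" for x :: 'a and r :: real
  have hm[measurable]: "(\<lambda>(x,r). h x r) \<in> borel_measurable (lborel \<Otimes>\<^sub>M lborel)"
    unfolding h_def by measurable
  have A: "ennreal (if norm x > R then norm x powr (-p) else 0) = (\<integral>\<^sup>+r. h x r \<partial>lborel)" for x :: 'a
  proof (cases "norm x > R")
    case True
    then have "(\<integral>\<^sup>+r. h x r \<partial>lborel) = (\<integral>\<^sup>+r. ennreal (p * r powr (-p-1)) * indicator {norm x..} r \<partial>lborel)"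
      by (intro nn_integral_cong) (auto simp: h_def indicator_def)
    also have "\<dots> = ennreal (norm x powr (-p))"
      using True R p0 by (intro tail_powr) auto
    finally show ?thesis using True by simp
  qed (auto simp: h_def)
  have "(\<integral>\<^sup>+x. ennreal (if norm x > R then norm x powr (-p) else 0) \<partial>(lborel::'a measure))
      = (\<integral>\<^sup>+x. (\<integral>\<^sup>+r. h x r \<partial>lborel) \<partial>lborel)"
    by (simp only: A)
  also have "\<dots> = (\<integral>\<^sup>+r. (\<integral>\<^sup>+x. h x r \<partial>lborel) \<partial>lborel)"
  proof -
    have P: "pair_sigma_finite (lborel :: 'a measure) (lborel :: real measure)"
      by (intro pair_sigma_finite.intro sigma_finite_lborel)
    show ?thesis by (rule pair_sigma_finite.Fubini'[OF P, symmetric]) measurable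
  qed
  also have "\<dots> = (\<integral>\<^sup>+r. ennreal (p * r powr (-p-1) * (V * r ^ d - V * R ^ d)) * indicator {R..} r \<partial>lborel)"
  proof (intro nn_integral_cong)
    fix r :: real
    define S where "S = {x::'a. R < norm x \<and> norm x \<le> r}"
    have Sm: "S \<in> sets lborel" unfolding S_def by measurable
    have "(\<integral>\<^sup>+x. h x r \<partial>lborel) = (\<integral>\<^sup>+x. ennreal (p * r powr (-p-1)) * indicator S x \<partial>lborel)"
      by (intro nn_integral_cong) (auto simp: h_def S_def indicator_def)
    also have "\<dots> = ennreal (p * r powr (-p-1)) * emeasure lborel S"
      using Sm by (rule nn_integral_cmult_indicator)
    also have "\<dots> = ennreal (p * r powr (-p-1) * (V * r ^ d - V * R ^ d)) * indicator {R..} r"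
    proof (cases "R \<le> r")
      case True
      have "S = cball 0 r - cball 0 R" by (auto simp: S_def)
      moreover have "emeasure lborel (cball (0::'a) r - cball 0 R) = emeasure lborel (cball (0::'a) r) - emeasure lborel (cball (0::'a) R)"
        using True R by (intro emeasure_Diff) (auto simp: emeasure_cball)
      ultimately have "emeasure lborel S = emeasure lborel (cball (0::'a) r) - emeasure lborel (cball (0::'a) R)"
        by simp
      also have "\<dots> = ennreal (V * r ^ d - V * R ^ d)"
        using True R by (simp add: emeasure_cball V_def n_def d_def ennreal_minus)
      finally have "emeasure lborel S = ennreal (V * r ^ d - V * R ^ d)" .
      moreover have "V * R ^ d \<le> V * r ^ d" using True R V by (intro mult_left_mono power_mono) auto
      ultimately show ?thesis using True p0 R by (simp add: ennreal_mult')
    next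
      case False
      then have "S = {}" by (auto simp: S_def)
      then show ?thesis using False by simp
    qed
    finally show "(\<integral>\<^sup>+x. h x r \<partial>lborel) = ennreal (p * r powr (-p-1) * (V * r ^ d - V * R ^ d)) * indicator {R..} r" .
  qed
  also have "\<dots> = ennreal (0 - (V * p / (n - p) * R powr (n - p) + V * R ^ d * R powr (-p)))"
  proof (rule nn_integral_FTC_atLeast[where F="\<lambda>r. V * p / (n - p) * r powr (n - p) + V * R ^ d * r powr (-p)" and T=0])
    show "(\<lambda>r. p * r powr (-p-1) * (V * r ^ d - V * R ^ d)) \<in> borel_measurable borel" by measurable
    show "DERIV (\<lambda>r. V * p / (n - p) * r powr (n - p) + V * R ^ d * r powr (-p)) x :> p * x powr (-p-1) * (V * x ^ d - V * R ^ d)"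
      if "R \<le> x" for x
    proof -
      have x: "x > 0" using R that by simp
      have np: "n - p \<noteq> 0" using p by (simp add: n_def d_def)
      have e: "x ^ d = x powr n" using x by (simp add: n_def powr_realpow)
      have "DERIV (\<lambda>r. V * p / (n - p) * r powr (n - p) + V * R ^ d * r powr (-p)) x :>
          V * p / (n - p) * ((n - p) * x powr (n - p - 1)) + V * R ^ d * (- p * x powr (- p - 1))"
        by (intro DERIV_add DERIV_cmult has_real_derivative_powr x)
      also have "V * p / (n - p) * ((n - p) * x powr (n - p - 1)) + V * R ^ d * (- p * x powr (- p - 1))
          = p * x powr (-p-1) * (V * x ^ d - V * R ^ d)"
        using np x by (simp add: e field_simps powr_add[symmetric])
      finally show ?thesis .
    qed
    show "0 \<le> p * x powr (-p-1) * (V * x ^ d - V * R ^ d)" if "R \<le> x" for x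
      using that R V p0 power_mono[of R x d] by (intro mult_nonneg_nonneg) auto
    have np: "n - p < 0" using p by (simp add: n_def d_def)
    show "((\<lambda>r. V * p / (n - p) * r powr (n - p) + V * R ^ d * r powr (-p)) \<longlongrightarrow> 0) at_top"
    proof -
      have l1: "((\<lambda>r::real. r powr (n-p)) \<longlongrightarrow> 0) at_top" by (rule tendsto_neg_powr[OF np filterlim_ident])
      have l2: "((\<lambda>r::real. r powr (-p)) \<longlongrightarrow> 0) at_top" using p0 by (intro tendsto_neg_powr filterlim_ident) auto
      show ?thesis
        using tendsto_add[OF tendsto_mult[OF tendsto_const[of "V * p / (n - p)"] l1] tendsto_mult[OF tendsto_const[of "V * R ^ d"] l2]]
        by (simp only: mult_zero_right add_0)
    qed
  qed
  also have "(0 - (V * p / (n - p) * R powr (n - p) + V * R ^ d * R powr (-p)))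
     = V * R powr (n - p) * n / (p - n)"
  proof -
    have np: "n - p \<noteq> 0" "p - n \<noteq> 0" using p by (auto simp: n_def d_def)
    have e: "R ^ d * R powr (-p) = R powr (n - p)" using R by (simp add: n_def powr_realpow[symmetric] powr_add[symmetric])
    show ?thesis using np by (simp add: e field_simps)
  qed
  finally show ?thesis by (simp add: V_def n_def d_def)
qed



lemma final_alg:
  fixes V \<delta> c M :: real and N k m :: nat
  assumes V: "V > 0" and d: "\<delta> > 0" and c: "c > 1/2" and M: "M > 0" and N: "N > 0" and mk: "m \<le> k"
  shows "V powr (- 2 * real k * c) * (((\<delta>/V) powr (1/real N)) powr (- (2*c*real N)))^(k-m) * (1/M^N) *
     (V * ((\<delta>/V) powr (1/real N)) powr (real N - 2*c*real N) * real N / (2*c*real N - real N))^m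
     = M powr (- real N) * \<delta> powr (real m - 2 * real k * c) / (2 * c - 1) ^ m"
proof -
  let ?b = "\<delta>/V"
  have b: "?b > 0" using V d by simp
  have e1: "((\<delta>/V) powr (1/real N)) powr (- (2*c*real N)) = ?b powr (-2*c)"
    using N by (simp add: powr_powr)
  have e2: "((\<delta>/V) powr (1/real N)) powr (real N - 2*c*real N) = ?b powr (1 - 2*c)"
  proof -
    have "1/real N * (real N - 2*c*real N) = 1 - 2*c" using N by (simp add: field_simps)
    then show ?thesis by (simp only: powr_powr)
  qed
  have e3: "real N / (2*c*real N - real N) = 1 / (2*c - 1)"
    using N c by (simp add: field_simps)
  have e4: "1 / M^N = M powr (- real N)" using M by (simp add: powr_minus powr_realpow divide_inverse)
  have "V powr (- 2 * real k * c) * (?b powr (-2*c))^(k-m) * (M powr (- real N)) *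
     (V * ?b powr (1 - 2*c) * (1 / (2*c - 1)))^m
     = V powr (- 2 * real k * c) * V ^ m * (?b powr (real (k-m) * (-2*c)) * ?b powr (real m * (1 - 2*c))) * M powr (- real N) / (2 * c - 1) ^ m"
  proof -
    have p1: "(?b powr (-2*c))^(k-m) = ?b powr (real (k-m) * (-2*c))"
      using V d by (intro powr_power) simp
    have p2: "(?b powr (1-2*c))^m = ?b powr (real m * (1-2*c))"
      using V d by (intro powr_power) simp
    have q: "(V * ?b powr (1 - 2*c) * (1 / (2*c - 1)))^m = V^m * ?b powr (real m * (1-2*c)) / (2*c-1)^m"
      unfolding p2[symmetric] by (simp add: power_mult_distrib power_divide)
    show ?thesis unfolding p1 q by (simp add: ac_simps)
  qed
  also have "?b powr (real (k-m) * (-2*c)) * ?b powr (real m * (1 - 2*c)) = ?b powr (real m - 2 * real k * c)"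
    using mk by (simp add: powr_add[symmetric] of_nat_diff algebra_simps)
  also have "?b powr (real m - 2 * real k * c) = \<delta> powr (real m - 2 * real k * c) / V powr (real m - 2 * real k * c)"
    by (rule powr_divide)
  also have "V ^ m = V powr real m" using V by (simp add: powr_realpow)
  also have "V powr (- 2 * real k * c) * V powr real m * (\<delta> powr (real m - 2 * real k * c) / V powr (real m - 2 * real k * c))
      = \<delta> powr (real m - 2 * real k * c) * (V powr (- 2 * real k * c) * V powr real m / V powr (real m - 2 * real k * c))"
    by simp
  also have "V powr (- 2 * real k * c) * V powr real m / V powr (real m - 2 * real k * c) = 1"
    using V by (simp add: powr_add[symmetric] powr_diff[symmetric])
  finally have F: "V powr (- 2 * real k * c) * (?b powr (-2*c))^(k-m) * (M powr (- real N)) *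
     (V * ?b powr (1 - 2*c) * (1 / (2*c - 1)))^m = \<delta> powr (real m - 2 * real k * c) * 1 * M powr (- real N) / (2 * c - 1) ^ m" .
  have e3': "V * ?b powr (1 - 2 * c) * real N / (2 * c * real N - real N) = V * ?b powr (1 - 2 * c) * (1 / (2 * c - 1))"
    using N c by (simp add: field_simps)
  show ?thesis unfolding e1 e2 e3' e4 F by (simp add: ac_simps)
qed



lemma mdet_cong:
  assumes "\<And>i j. i < m \<Longrightarrow> j < m \<Longrightarrow> A i j = B i j"
  shows "mdet m A = mdet m B"
  unfolding mdet_def
proof (rule sum.cong[OF refl])
  fix p assume "p \<in> {p. p permutes {..<m}}"
  then have pm: "p permutes {..<m}" by simp
  have "(\<Prod>i<m. A i (p i)) = (\<Prod>i<m. B i (p i))"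
  proof (rule prod.cong[OF refl])
    fix i assume i: "i \<in> {..<m}"
    then have "p i \<in> {..<m}" using permutes_in_image[OF pm] by simp
    then show "A i (p i) = B i (p i)" using i assms by simp
  qed
  then show "sign p * (\<Prod>i<m. A i (p i)) = sign p * (\<Prod>i<m. B i (p i))" by simp
qed

lemma mdet_det: "mdet m A = det (mat m m (\<lambda>(i,j). A i j))"
proof -
  have d: "det (mat m m (\<lambda>(i,j). A i j)) = (\<Sum>p | p permutes {..<m}. sign p * (\<Prod>i<m. mat m m (\<lambda>(i,j). A i j) $$ (i, p i)))"
    unfolding det_def by (simp add: atLeast0LessThan)
  show ?thesis
    unfolding mdet_def d
  proof (rule sum.cong[OF refl])
    fix p assume "p \<in> {p. p permutes {..<m}}"
    then have pm: "p permutes {..<m}" by simp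
    have "(\<Prod>i<m. A i (p i)) = (\<Prod>i<m. mat m m (\<lambda>(i,j). A i j) $$ (i, p i))"
    proof (rule prod.cong[OF refl])
      fix i assume i: "i \<in> {..<m}"
      then have "p i \<in> {..<m}" using permutes_in_image[OF pm] by simp
      then show "A i (p i) = mat m m (\<lambda>(i,j). A i j) $$ (i, p i)" using i by simp
    qed
    then show "sign p * (\<Prod>i<m. A i (p i)) = sign p * (\<Prod>i<m. mat m m (\<lambda>(i,j). A i j) $$ (i, p i))" by simp
  qed
qed

lemma fcd_meas[measurable]: "fcd c \<delta> \<in> borel_measurable borel"
  unfolding fcd_def[abs_def] by measurable

theorem lemma5p1:
  fixes k m :: nat and \<nu> \<mu> :: "nat \<Rightarrow> nat" and q :: int and D :: "nat \<Rightarrow> nat \<Rightarrow> int"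
    and c \<delta> :: real
  assumes "k \<ge> 2" and "c > 1/2" and "\<delta> > 0"
    and "admissible k m \<nu> \<mu> q D"
  shows "Iint k m q D c \<delta> TYPE('n::finite)
           \<le> ennreal (MD k m q D powr (- real CARD('n)) *
                      \<delta> powr (real m - 2 * real k * c) / (2 * c - 1) ^ m)"
proof -
  have A1: "is_division k m \<nu> \<mu>" and q: "q > 0"
    and A3: "\<forall>i<m. \<forall>j<m. D i (\<nu> j) = (if i = j then q else 0)"
    using assms(4) unfolding admissible_def by blast+
  have mk1: "m \<le> k - 1" and nu_mono: "strict_mono_on {..<m} \<nu>" and nu_k: "\<nu> ` {..<m} \<subseteq> {..<k}"
    using A1 unfolding is_division_def by blast+
  have mk: "m \<le> k" using mk1 by linarith
  have Dnu: "\<And>i j. i < m \<Longrightarrow> j < m \<Longrightarrow> D i (\<nu> j) = (if i = j then q else 0)"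
    using A3 by blast
  have c: "c > 1/2" and d: "\<delta> > 0" using assms by auto
  define N where "N = CARD('n)"
  have N: "N > 0" by (simp add: N_def)
  define V where "V = Vn N"
  have Vu: "V = unit_ball_vol (real DIM(real^'n))" by (simp add: V_def N_def Vn_def unit_ball_vol_def)
  have V: "V > 0" by (simp add: Vu)
  define R where "R = (\<delta> / V) powr (1 / real N)"
  have R: "R > 0" using V d by (simp add: R_def)
  have RnR: "Rn CARD('n) \<delta> = R" by (simp add: Rn_def R_def V_def N_def)
  define Sv where "Sv = {\<bar>mdet m (\<lambda>i j. D i (s j))\<bar> | s. strict_mono_on {..<m} s \<and> s ` {..<m} \<subseteq> {..<k}}"
  have Sv_fin: "finite Sv"
  proof (rule finite_subset)
    show "Sv \<subseteq> (\<lambda>s. \<bar>mdet m (\<lambda>i j. D i (s j))\<bar>) ` ({..<m} \<rightarrow>\<^sub>E {..<k})"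
    proof
      fix v assume "v \<in> Sv"
      then obtain s where s: "s ` {..<m} \<subseteq> {..<k}" and v: "v = \<bar>mdet m (\<lambda>i j. D i (s j))\<bar>"
        unfolding Sv_def by blast
      have "v = \<bar>mdet m (\<lambda>i j. D i (restrict s {..<m} j))\<bar>"
        unfolding v by (subst mdet_cong[of m _ "\<lambda>i j. D i (s j)"]) auto
      moreover have "restrict s {..<m} \<in> {..<m} \<rightarrow>\<^sub>E {..<k}" using s by auto
      ultimately show "v \<in> (\<lambda>s. \<bar>mdet m (\<lambda>i j. D i (s j))\<bar>) ` ({..<m} \<rightarrow>\<^sub>E {..<k})" by blast
    qed
  qed (simp add: finite_PiE)
  have mdet_nu: "mdet m (\<lambda>i j. D i (\<nu> j)) = q ^ m"
  proof -
    have "mdet m (\<lambda>i j. D i (\<nu> j)) = mdet m (\<lambda>i j. if i = j then q else 0)"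
      by (rule mdet_cong) (simp add: Dnu)
    also have "\<dots> = det (q \<cdot>\<^sub>m 1\<^sub>m m)"
      unfolding mdet_det by (intro arg_cong[where f=det] eq_matI) auto
    also have "\<dots> = q ^ m" by simp
    finally show ?thesis .
  qed
  have nuSv: "q ^ m \<in> Sv"
    unfolding Sv_def using nu_mono nu_k mdet_nu q by (intro CollectI exI[of _ \<nu>]) auto
  have "Max Sv \<in> Sv" using Sv_fin nuSv by (intro Max_in) auto
  then have "\<exists>s. Max Sv = \<bar>mdet m (\<lambda>i j. D i (s j))\<bar> \<and> strict_mono_on {..<m} s \<and> s ` {..<m} \<subseteq> {..<k}"
    unfolding Sv_def by (rule CollectD)
  then obtain s where s_mono: "strict_mono_on {..<m} s" and s_k: "s ` {..<m} \<subseteq> {..<k}"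
    and s_max: "\<bar>mdet m (\<lambda>i j. D i (s j))\<bar> = Max Sv"
    by auto
  have Max_ge: "q ^ m \<le> Max Sv" using Sv_fin nuSv by (rule Max_ge)
  define a where "a i j = real_of_int (D i (s j)) / real_of_int q" for i j
  have detA: "det (mat m m (\<lambda>(i,j). a i j)) = real_of_int (mdet m (\<lambda>i j. D i (s j))) / real_of_int q ^ m"
  proof -
    have "mat m m (\<lambda>(i,j). a i j) = (1 / real_of_int q) \<cdot>\<^sub>m map_mat real_of_int (mat m m (\<lambda>(i,j). D i (s j)))"
      by (rule eq_matI) (auto simp: a_def)
    then have "det (mat m m (\<lambda>(i,j). a i j)) = (1 / real_of_int q) ^ m * real_of_int (det (mat m m (\<lambda>(i,j). D i (s j))))"
      by (simp add: of_int_hom.hom_det)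
    then show ?thesis by (simp add: mdet_det power_divide)
  qed
  have MDeq: "MD k m q D = \<bar>det (mat m m (\<lambda>(i,j). a i j))\<bar>"
    unfolding MD_def Sv_def[symmetric] detA s_max[symmetric]
    using q by (simp add: power_int_minus abs_mult field_simps)
  have MDpos: "MD k m q D > 0"
  proof -
    have "real_of_int (Max Sv) > 0" using Max_ge q by (smt (verit) of_int_pos zero_less_power)
    then show ?thesis unfolding MD_def Sv_def[symmetric] using q by (simp add: power_int_minus)
  qed
  have detA0: "det (mat m m (\<lambda>(i,j). a i j)) \<noteq> 0"
  proof
    assume "det (mat m m (\<lambda>(i,j). a i j)) = 0"
    then have "MD k m q D = 0" by (simp only: MDeq abs_zero)
    with MDpos show False by simp
  qed
  define p where "p = 2 * c * real N"
  define C where "C = R powr (- p)"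
  have fcd_eq: "fcd c \<delta> y = (if norm y > R then norm y powr (- p) else 0)" for y :: "real ^ 'n"
    by (simp add: fcd_def RnR p_def N_def)
  have fcd_nn: "0 \<le> fcd c \<delta> y" for y :: "real ^ 'n" by (simp add: fcd_eq)
  have p0: "p > 0" using c N by (simp add: p_def)
  have fcd_le: "fcd c \<delta> y \<le> C" for y :: "real ^ 'n"
    unfolding fcd_eq C_def using R p0 by (auto intro!: powr_mono2' simp: less_imp_le)
  have C0: "C \<ge> 0" unfolding C_def by simp
  define g where "g = (\<lambda>y::real^'n. ennreal (fcd c \<delta> y))"
  have gm[measurable]: "g \<in> borel_measurable borel" unfolding g_def by measurable
  have inj_s: "inj_on s {..<m}" using s_mono by (rule strict_mono_on_imp_inj_on)
  have pw: "ennreal (\<Prod>j<k. fcd c \<delta> (\<Sum>i<m. (real_of_int (D i j) / real_of_int q) *\<^sub>R (x i :: real ^ 'n)))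
     \<le> ennreal (C ^ (k - m)) * (\<Prod>j<m. g (\<Sum>i<m. a i j *\<^sub>R x i))" for x
  proof -
    define f where "f j = fcd c \<delta> (\<Sum>i<m. (real_of_int (D i j) / real_of_int q) *\<^sub>R (x i :: real ^ 'n))" for j
    let ?S = "s ` {..<m}"
    have cardS: "card ?S = m" using inj_s by (simp add: card_image)
    have "(\<Prod>j<k. f j) = (\<Prod>j\<in>{..<k} - ?S. f j) * (\<Prod>j\<in>?S. f j)"
      using s_k by (intro prod.subset_diff) auto
    also have "(\<Prod>j\<in>?S. f j) = (\<Prod>j<m. f (s j))"
      using inj_s by (simp add: prod.reindex)
    finally have a: "(\<Prod>j<k. f j) = (\<Prod>j\<in>{..<k} - ?S. f j) * (\<Prod>j<m. f (s j))" .
    have "(\<Prod>j\<in>{..<k} - ?S. f j) \<le> (\<Prod>j\<in>{..<k} - ?S. C)"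
      by (intro prod_mono) (auto simp: f_def fcd_nn fcd_le)
    also have "(\<Prod>j\<in>{..<k} - ?S. C) = C ^ (k - m)"
      using s_k cardS by (simp add: card_Diff_subset)
    finally have b: "(\<Prod>j\<in>{..<k} - ?S. f j) \<le> C ^ (k - m)" .
    have 1: "(\<Prod>j<k. f j) \<le> C ^ (k - m) * (\<Prod>j<m. f (s j))"
      unfolding a by (rule mult_right_mono[OF b]) (auto intro!: prod_nonneg simp: f_def fcd_nn)
    have 2: "(\<Prod>j<m. f (s j)) = (\<Prod>j<m. fcd c \<delta> (\<Sum>i<m. a i j *\<^sub>R x i))"
      by (simp add: f_def a_def)
    have "ennreal (\<Prod>j<k. f j) \<le> ennreal (C ^ (k - m) * (\<Prod>j<m. fcd c \<delta> (\<Sum>i<m. a i j *\<^sub>R x i)))"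
      using 1 2 by (intro ennreal_leI) simp
    also have "\<dots> = ennreal (C ^ (k - m)) * (\<Prod>j<m. g (\<Sum>i<m. a i j *\<^sub>R x i))"
      using C0 by (simp add: ennreal_mult prod_nonneg fcd_nn g_def prod_ennreal)
    finally show ?thesis by (simp add: f_def)
  qed
  define J where "J = V * R powr (real N - p) * real N / (p - real N)"
  have pN: "p > real N" using c N by (simp add: p_def)
  have intg: "(\<integral>\<^sup>+y. g y \<partial>lborel) = ennreal J"
  proof -
    have "(\<integral>\<^sup>+y. g y \<partial>lborel) = (\<integral>\<^sup>+y. ennreal (if norm y > R then norm y powr (-p) else 0) \<partial>(lborel :: (real^'n) measure))"
      by (simp add: g_def fcd_eq)
    also have "\<dots> = ennreal J"
      using radial[OF R, where 'a="real^'n", of p] pN by (simp add: J_def Vu N_def)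
    finally show ?thesis .
  qed
  have covA: "ennreal (MD k m q D ^ N) * (\<integral>\<^sup>+x. (\<Prod>j<m. g (\<Sum>i<m. a i j *\<^sub>R x i)) \<partial>PiM {..<m} (\<lambda>_. lborel))
      = ennreal J ^ m"
    using cov[OF detA0, of "\<lambda>_. g"] by (simp add: MDeq N_def intg)
  have intP: "(\<integral>\<^sup>+x. (\<Prod>j<m. g (\<Sum>i<m. a i j *\<^sub>R x i)) \<partial>PiM {..<m} (\<lambda>_. lborel))
      = ennreal (1 / MD k m q D ^ N) * ennreal J ^ m"
  proof -
    let ?X = "(\<integral>\<^sup>+x. (\<Prod>j<m. g (\<Sum>i<m. a i j *\<^sub>R x i)) \<partial>PiM {..<m} (\<lambda>_. lborel))"
    have e: "ennreal (1 / MD k m q D ^ N) * ennreal (MD k m q D ^ N) = 1"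
    proof -
      have "ennreal (1 / MD k m q D ^ N) * ennreal (MD k m q D ^ N) = ennreal (1 / MD k m q D ^ N * MD k m q D ^ N)"
        using MDpos by (intro ennreal_mult[symmetric]) auto
      also have "1 / MD k m q D ^ N * MD k m q D ^ N = 1" using MDpos by simp
      finally show ?thesis by simp
    qed
    have "?X = (ennreal (1 / MD k m q D ^ N) * ennreal (MD k m q D ^ N)) * ?X" by (simp only: e mult_1)
    also have "\<dots> = ennreal (1 / MD k m q D ^ N) * (ennreal (MD k m q D ^ N) * ?X)" by (simp only: mult.assoc)
    also have "\<dots> = ennreal (1 / MD k m q D ^ N) * ennreal J ^ m" by (simp only: covA)
    finally show ?thesis .
  qed
  have "Iint k m q D c \<delta> TYPE('n) = ennreal (V powr (- 2 * real k * c)) *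
     (\<integral>\<^sup>+x. ennreal (\<Prod>j<k. fcd c \<delta> (\<Sum>i<m. (real_of_int (D i j) / real_of_int q) *\<^sub>R (x i :: real ^ 'n))) \<partial>PiM {..<m} (\<lambda>_. lborel))"
    by (simp add: Iint_def V_def N_def)
  also have "\<dots> \<le> ennreal (V powr (- 2 * real k * c)) *
     (\<integral>\<^sup>+x. ennreal (C ^ (k - m)) * (\<Prod>j<m. g (\<Sum>i<m. a i j *\<^sub>R x i)) \<partial>PiM {..<m} (\<lambda>_. lborel))"
    by (intro mult_left_mono nn_integral_mono pw) auto
  also have "\<dots> = ennreal (V powr (- 2 * real k * c)) * ennreal (C ^ (k - m)) *
     (ennreal (1 / MD k m q D ^ N) * ennreal J ^ m)"
    by (subst nn_integral_cmult) (measurable, simp add: intP mult.assoc)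
  also have "\<dots> = ennreal (V powr (- 2 * real k * c) * C ^ (k - m) * (1 / MD k m q D ^ N) * J ^ m)"
  proof -
    have J0: "J \<ge> 0" using V R pN by (simp add: J_def)
    have 1: "ennreal (V powr (- 2 * real k * c)) * ennreal (C ^ (k - m)) = ennreal (V powr (- 2 * real k * c) * C ^ (k - m))"
      using C0 by (intro ennreal_mult[symmetric]) auto
    have 2: "ennreal J ^ m = ennreal (J ^ m)" using J0 by (rule ennreal_power)
    have 3: "ennreal (1 / MD k m q D ^ N) * ennreal (J ^ m) = ennreal (1 / MD k m q D ^ N * J ^ m)"
      using J0 MDpos by (intro ennreal_mult[symmetric]) auto
    have 4: "ennreal (V powr (- 2 * real k * c) * C ^ (k - m)) * ennreal (1 / MD k m q D ^ N * J ^ m)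
       = ennreal (V powr (- 2 * real k * c) * C ^ (k - m) * (1 / MD k m q D ^ N * J ^ m))"
      using J0 MDpos C0 by (intro ennreal_mult[symmetric]) auto
    show ?thesis unfolding 2 3 1 4 by (simp only: mult.assoc)
  qed
  also have "ennreal (V powr (- 2 * real k * c) * C ^ (k - m) * (1 / MD k m q D ^ N) * J ^ m)
      = ennreal (MD k m q D powr (- real CARD('n)) * \<delta> powr (real m - 2 * real k * c) / (2 * c - 1) ^ m)"
    unfolding C_def J_def R_def p_def N_def[symmetric]
    by (rule arg_cong[where f=ennreal, OF final_alg[OF V d c MDpos N mk]])
  finally show ?thesis .
qed


end
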